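(* Let $n\ge 2$, and let $f\in C((0,\infty))$ be positive and monotone non-decreasing, with $$f(u)\ge \mathcal{A}\,u^p\quad\text{for all }u>0$$ for some $p>n$ and $\mathcal{A}>0$. Then there is no positive convex function $u\in C^2(\mathbb{R}^n)$ solving $\det D^2u=f(u)$ on all of $\mathbb{R}^n$. *)

theory Defs
  imports "HOL-Analysis.Analysis"
begin

definition C2_with_hessian ::
  "(real^'n \<Rightarrow> real) \<Rightarrow> (real^'n \<Rightarrow> real^'n) \<Rightarrow> (real^'n \<Rightarrow> real^'n^'n) \<Rightarrow> bool" where
  "C2_with_hessian u g H \<longleftrightarrow>
     (\<forall>x. (u has_derivative (\<lambda>h. g x \<bullet> h)) (at x)) \<and>
     (\<forall>x. (g has_derivative (\<lambda>h. H x *v h)) (at x)) \<and>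
     continuous_on UNIV H"

end

theory Submission
  imports Defs
begin


lemma line_d1:
  assumes "C2_with_hessian u g H"
  shows "((\<lambda>t. u (x + t *\<^sub>R e)) has_real_derivative (g (x + t *\<^sub>R e) \<bullet> e)) (at t)"
proof -
  have du: "(u has_derivative (\<lambda>h. g y \<bullet> h)) (at y)" for y
    using assms unfolding C2_with_hessian_def by blast
  have dl: "((\<lambda>t. x + t *\<^sub>R e) has_derivative (\<lambda>h. h *\<^sub>R e)) (at t)"
    by (auto intro!: derivative_eq_intros)
  have "((\<lambda>t. u (x + t *\<^sub>R e)) has_derivative (\<lambda>h. g (x + t *\<^sub>R e) \<bullet> (h *\<^sub>R e))) (at t)"
    using has_derivative_compose[OF dl du] by (simp add: o_def)
  moreover have "(\<lambda>h. g (x + t *\<^sub>R e) \<bullet> (h *\<^sub>R e)) = (*) (g (x + t *\<^sub>R e) \<bullet> e)"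
    by (auto simp: fun_eq_iff)
  ultimately show ?thesis unfolding has_field_derivative_def by simp
qed

lemma line_d2:
  assumes "C2_with_hessian u g H"
  shows "((\<lambda>t. g (x + t *\<^sub>R e) \<bullet> e) has_real_derivative (e \<bullet> (H (x + t *\<^sub>R e) *v e))) (at t)"
proof -
  have dg: "(g has_derivative (\<lambda>h. H y *v h)) (at y)" for y
    using assms unfolding C2_with_hessian_def by blast
  have dl: "((\<lambda>t. x + t *\<^sub>R e) has_derivative (\<lambda>h. h *\<^sub>R e)) (at t)"
    by (auto intro!: derivative_eq_intros)
  have "((\<lambda>t. g (x + t *\<^sub>R e)) has_derivative (\<lambda>h. H (x + t *\<^sub>R e) *v (h *\<^sub>R e))) (at t)"
    using has_derivative_compose[OF dl dg] by (simp add: o_def)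
  from has_derivative_inner_left[OF this, of e]
  have "((\<lambda>t. g (x + t *\<^sub>R e) \<bullet> e) has_derivative (\<lambda>h. (H (x + t *\<^sub>R e) *v (h *\<^sub>R e)) \<bullet> e)) (at t)" .
  moreover have "(\<lambda>h. (H (x + t *\<^sub>R e) *v (h *\<^sub>R e)) \<bullet> e) = (*) (e \<bullet> (H (x + t *\<^sub>R e) *v e))"
    by (auto simp: fun_eq_iff matrix_vector_mult_scaleR inner_commute)
  ultimately show ?thesis unfolding has_field_derivative_def by simp
qed

lemma u_cont:
  assumes "C2_with_hessian u g H"
  shows "continuous_on S u"
proof -
  have "(u has_derivative (\<lambda>h. g y \<bullet> h)) (at y)" for y
    using assms unfolding C2_with_hessian_def by blast
  then show ?thesis
    by (meson continuous_at_imp_continuous_on has_derivative_continuous)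
qed

lemma tangent:
  assumes "C2_with_hessian u g H" "convex_on UNIV u"
  shows "u y \<ge> u x + g x \<bullet> (y - x)"
proof -
  let ?phi = "\<lambda>t. u (x + t *\<^sub>R (y - x))"
  have cv: "convex_on UNIV ?phi"
  proof (rule convex_onI)
    fix t a b :: real assume t: "0 < t" "t < 1"
    have "x + ((1 - t) *\<^sub>R a + t *\<^sub>R b) *\<^sub>R (y - x) = (1 - t) *\<^sub>R (x + a *\<^sub>R (y - x)) + t *\<^sub>R (x + b *\<^sub>R (y - x))"
      by (simp add: algebra_simps)
    then show "?phi ((1 - t) *\<^sub>R a + t *\<^sub>R b) \<le> (1 - t) * ?phi a + t * ?phi b"
      using convex_onD[OF assms(2), of t "x + a *\<^sub>R (y - x)" "x + b *\<^sub>R (y - x)"] t by simp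
  qed simp
  have d: "(?phi has_field_derivative (g x \<bullet> (y - x))) (at 0 within UNIV)"
    using line_d1[OF assms(1), of x "y - x" 0] by simp
  have "?phi 1 - ?phi 0 \<ge> (g x \<bullet> (y - x)) * (1 - 0)"
    by (rule convex_on_imp_above_tangent[OF cv]) (use d in auto)
  then show ?thesis by simp
qed



lemma quad_disc:
  fixes a b c :: real
  assumes "\<And>t. 0 \<le> c + 2*t*b + t^2*a"
  shows "b^2 \<le> a*c"
proof (cases "a = 0")
  case True
  show ?thesis
  proof (rule ccontr)
    assume "\<not> ?thesis"
    then have "b \<noteq> 0" using True by simp
    have "0 \<le> c + 2*(-(c+1)/(2*b))*b + (-(c+1)/(2*b))^2*a" by (rule assms)
    also have "\<dots> = -1" using True \<open>b \<noteq> 0\<close> by (simp add: field_simps)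
    finally show False by simp
  qed
next
  case False
  have a0: "a \<ge> 0"
  proof (rule ccontr)
    assume "\<not> a \<ge> 0"
    then have an: "a < 0" by simp
    define T where "T = sqrt ((\<bar>c\<bar> + 1) / (-a))"
    have T2: "T^2 = (\<bar>c\<bar> + 1) / (-a)" unfolding T_def using an by (simp add: divide_nonneg_neg divide_nonpos_neg)
    have "0 \<le> c + 2*T*b + T^2*a" "0 \<le> c + 2*(-T)*b + (-T)^2*a" using assms by blast+
    then have "0 \<le> c + T^2*a" by simp
    also have "T^2*a = -(\<bar>c\<bar> + 1)" using an by (simp add: T2)
    finally show False by simp
  qed
  with False have ap: "a > 0" by simp
  have "0 \<le> c + 2*(-b/a)*b + (-b/a)^2*a" by (rule assms)
  also have "\<dots> = c - b^2/a" using ap by (simp add: field_simps power2_eq_square)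
  finally show ?thesis using ap by (simp add: field_simps)
qed

lemma det_crude:
  fixes M :: "real^'n^'n"
  assumes "\<And>i j. \<bar>M$i$j\<bar> \<le> c"
  shows "\<bar>det M\<bar> \<le> real (card {p. p permutes (UNIV::'n set)}) * c ^ CARD('n)"
proof -
  have c0: "c \<ge> 0" using assms[of undefined undefined] by simp
  have "\<bar>det M\<bar> \<le> (\<Sum>p\<in>{p. p permutes (UNIV::'n set)}. \<bar>of_int (sign p) * (\<Prod>i\<in>UNIV. M$i$p i)\<bar>)"
    unfolding det_def by (rule sum_abs)
  also have "\<dots> \<le> (\<Sum>p\<in>{p. p permutes (UNIV::'n set)}. c ^ CARD('n))"
  proof (rule sum_mono)
    fix p
    have "\<bar>of_int (sign p) * (\<Prod>i\<in>UNIV. M$i$p i)\<bar> = (\<Prod>i\<in>UNIV. \<bar>M$i$p i\<bar>)"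
      by (simp add: abs_mult sign_def abs_prod)
    also have "\<dots> \<le> (\<Prod>i\<in>(UNIV::'n set). c)"
      by (rule prod_mono) (use assms in auto)
    finally show "\<bar>of_int (sign p) * (\<Prod>i\<in>UNIV. M$i$p i)\<bar> \<le> c ^ CARD('n)" by simp
  qed
  also have "\<dots> = real (card {p. p permutes (UNIV::'n set)}) * c ^ CARD('n)" by simp
  finally show ?thesis .
qed

lemma quad_expand:
  fixes H :: "real^'n^'n"
  assumes sym: "\<And>x y. x \<bullet> (H *v y) = y \<bullet> (H *v x)"
  shows "(x + t *\<^sub>R y) \<bullet> (H *v (x + t *\<^sub>R y)) = x \<bullet> (H *v x) + 2*t*(x \<bullet> (H *v y)) + t^2 * (y \<bullet> (H *v y))"
  using sym[of y x]
  by (simp add: matrix_vector_right_distrib matrix_vector_mult_scaleR inner_add_left inner_add_right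
      algebra_simps power2_eq_square)

lemma det_bound:
  fixes H :: "real^'n^'n"
  assumes sym: "\<And>x y. x \<bullet> (H *v y) = y \<bullet> (H *v x)"
    and psd: "\<And>x. 0 \<le> x \<bullet> (H *v x)"
    and up: "\<And>x. x \<bullet> (H *v x) \<le> lam * (x \<bullet> x)"
    and lam: "lam > 0"
  shows "det H \<le> lam ^ CARD('n)"
proof -
  have CS: "(x \<bullet> (H *v y))^2 \<le> (y \<bullet> (H *v y)) * (x \<bullet> (H *v x))" for x y
    by (rule quad_disc) (metis psd quad_expand[OF sym])
  have nb: "norm (H *v x) \<le> lam * norm x" for x
  proof -
    define y where "y = H *v x"
    have "x \<bullet> (H *v y) = y \<bullet> y" using sym[of x y] by (simp add: y_def)
    then have "(y \<bullet> y)^2 \<le> (y \<bullet> (H *v y)) * (x \<bullet> (H *v x))" using CS[of x y] by simp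
    also have "\<dots> \<le> (lam * (y \<bullet> y)) * (lam * (x \<bullet> x))"
      by (rule mult_mono) (use up psd lam in \<open>auto intro: mult_nonneg_nonneg\<close>)
    finally have h: "(y \<bullet> y)^2 \<le> (y \<bullet> y) * (lam^2 * (x \<bullet> x))" by (simp add: algebra_simps power2_eq_square)
    have "y \<bullet> y \<le> lam^2 * (x \<bullet> x)"
    proof (cases "y \<bullet> y = 0")
      case True then show ?thesis by simp
    next
      case False
      then have "y \<bullet> y > 0" by (simp add: order_less_le)
      with h show ?thesis by (simp add: power2_eq_square)
    qed
    then have "norm y ^ 2 \<le> (lam * norm x)^2"
      by (simp add: power2_norm_eq_inner power_mult_distrib)
    then show ?thesis unfolding y_def using lam
      by (meson abs_le_square_iff abs_of_nonneg norm_ge_zero order.trans zero_le_mult_iff less_imp_le abs_ge_self power2_le_imp_le)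
  qed
  define mp :: "nat \<Rightarrow> real^'n^'n" where "mp k = ((\<lambda>A. H ** A) ^^ k) (mat 1)" for k
  have mpS: "mp (Suc k) = H ** mp k" for k by (simp add: mp_def)
  have mp0: "mp 0 = mat 1" by (simp add: mp_def)
  have detmp: "det (mp k) = det H ^ k" for k
    by (induction k) (simp_all add: mp0 mpS det_mul)
  have nmp: "norm (mp k *v x) \<le> lam ^ k * norm x" for k x
  proof (induction k arbitrary: x)
    case 0 then show ?case by (simp add: mp0)
  next
    case (Suc k)
    have "norm (mp (Suc k) *v x) = norm (H *v (mp k *v x))"
      by (simp add: mpS matrix_vector_mul_assoc)
    also have "\<dots> \<le> lam * norm (mp k *v x)" by (rule nb)
    also have "\<dots> \<le> lam * (lam ^ k * norm x)" using Suc lam by (simp add: mult_left_mono)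
    finally show ?case by simp
  qed
  have ent: "\<bar>mp k $ i $ j\<bar> \<le> lam ^ k" for k i j
  proof -
    have "mp k $ i $ j = (mp k *v axis j 1) $ i"
      by (simp add: matrix_vector_mult_def axis_def if_distrib cong: if_cong)
    also have "\<bar>\<dots>\<bar> \<le> norm (mp k *v axis j 1)" by (rule component_le_norm_cart)
    also have "\<dots> \<le> lam ^ k" using nmp[of k "axis j 1"] by simp
    finally show ?thesis .
  qed
  define N where "N = real (card {p. p permutes (UNIV::'n set)})"
  have bk: "det H ^ k \<le> N * (lam ^ CARD('n)) ^ k" for k
  proof -
    have "det H ^ k \<le> \<bar>det (mp k)\<bar>" by (simp add: detmp)
    also have "\<dots> \<le> N * (lam ^ k) ^ CARD('n)" unfolding N_def by (rule det_crude[OF ent])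
    finally show ?thesis by (simp add: power_mult[symmetric] mult.commute)
  qed
  show ?thesis
  proof (rule ccontr)
    assume "\<not> ?thesis"
    then have gt: "det H > lam ^ CARD('n)" by simp
    have lp: "lam ^ CARD('n) > 0" using lam by simp
    define r where "r = det H / lam ^ CARD('n)"
    have r1: "r > 1" using gt lp unfolding r_def by simp
    obtain k where k: "N < r ^ k" using real_arch_pow[OF r1] by blast
    have "r ^ k = det H ^ k / (lam ^ CARD('n)) ^ k" unfolding r_def by (simp add: power_divide)
    also have "\<dots> \<le> N" using bk[of k] lp by (simp add: divide_le_eq)
    finally show False using k by simp
  qed
qed



lemma line_d2g:
  assumes "C2_with_hessian u g H"
  shows "((\<lambda>t. g (x + t *\<^sub>R e) \<bullet> c) has_real_derivative (c \<bullet> (H (x + t *\<^sub>R e) *v e))) (at t)"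
proof -
  have dg: "(g has_derivative (\<lambda>h. H y *v h)) (at y)" for y
    using assms unfolding C2_with_hessian_def by blast
  have dl: "((\<lambda>t. x + t *\<^sub>R e) has_derivative (\<lambda>h. h *\<^sub>R e)) (at t)"
    by (auto intro!: derivative_eq_intros)
  have "((\<lambda>t. g (x + t *\<^sub>R e)) has_derivative (\<lambda>h. H (x + t *\<^sub>R e) *v (h *\<^sub>R e))) (at t)"
    using has_derivative_compose[OF dl dg] by (simp add: o_def)
  from has_derivative_inner_left[OF this, of c]
  have "((\<lambda>t. g (x + t *\<^sub>R e) \<bullet> c) has_derivative (\<lambda>h. (H (x + t *\<^sub>R e) *v (h *\<^sub>R e)) \<bullet> c)) (at t)" .
  moreover have "(\<lambda>h. (H (x + t *\<^sub>R e) *v (h *\<^sub>R e)) \<bullet> c) = (*) (c \<bullet> (H (x + t *\<^sub>R e) *v e))"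
    by (auto simp: fun_eq_iff matrix_vector_mult_scaleR inner_commute)
  ultimately show ?thesis unfolding has_field_derivative_def by simp
qed

lemma second_order_max:
  fixes psi psi' :: "real \<Rightarrow> real"
  assumes d1: "\<And>t. (psi has_real_derivative psi' t) (at t)"
    and d2: "(psi' has_real_derivative d) (at 0)"
    and dp: "\<delta> > 0" and mx: "\<And>t. \<bar>t\<bar> < \<delta> \<Longrightarrow> psi t \<le> psi 0"
  shows "d \<le> 0"
proof (rule ccontr)
  assume "\<not> d \<le> 0"
  then have dpos: "d > 0" by simp
  have p0: "psi' 0 = 0"
    by (rule DERIV_local_max[OF d1 dp]) (use mx in auto)
  obtain e where e: "e > 0" "\<And>h. h > 0 \<Longrightarrow> h < e \<Longrightarrow> psi' 0 < psi' (0 + h)"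
    using DERIV_pos_inc_right[OF d2 dpos] by blast
  define t where "t = min e \<delta> / 2"
  have t: "0 < t" "t < e" "t < \<delta>" using e dp unfolding t_def by auto
  obtain z where z: "0 < z" "z < t" "psi t - psi 0 = (t - 0) * psi' z"
    using MVT2[of 0 t psi psi'] t d1 by blast
  have "psi' z > 0" using e(2)[of z] z t p0 by simp
  then have "psi t > psi 0" using z t by (simp add: algebra_simps)
  moreover have "psi t \<le> psi 0" using mx[of t] t by simp
  ultimately show False by simp
qed

lemma psd:
  assumes C2: "C2_with_hessian u g H" and cv: "convex_on UNIV u"
  shows "0 \<le> e \<bullet> (H x *v e)"
proof -
  define psi where "psi t = -(u (x + t *\<^sub>R e) - u x - t * (g x \<bullet> e))" for t
  define psi' where "psi' t = -(g (x + t *\<^sub>R e) \<bullet> e - g x \<bullet> e)" for t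
  have d1: "(psi has_real_derivative psi' t) (at t)" for t
    unfolding psi_def psi'_def
    by (rule derivative_eq_intros line_d1[OF C2] | simp)+
  have d2: "(psi' has_real_derivative (-(e \<bullet> (H x *v e)))) (at 0)"
    unfolding psi'_def
    using DERIV_minus[OF DERIV_diff[OF line_d2g[OF C2, where x=x and e=e and c=e and t=0] DERIV_const]]
    by simp
  have "psi t \<le> psi 0" for t
    using tangent[OF C2 cv, of x "x + t *\<^sub>R e"] unfolding psi_def by (simp add: algebra_simps)
  then have "-(e \<bullet> (H x *v e)) \<le> 0"
    by (intro second_order_max[OF d1 d2, of 1]) auto
  then show ?thesis by simp
qed



lemma delta_repr:
  assumes C2: "C2_with_hessian u g H" and s: "s > 0"
  shows "\<exists>\<tau> \<rho>. 0 < \<tau> \<and> \<tau> < s \<and> 0 < \<rho> \<and> \<rho> < s \<and>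
    u (x + s *\<^sub>R v + s *\<^sub>R w) - u (x + s *\<^sub>R v) - u (x + s *\<^sub>R w) + u x
      = s^2 * (v \<bullet> (H (x + \<tau> *\<^sub>R v + \<rho> *\<^sub>R w) *v w))"
proof -
  define a where "a t = u ((x + s *\<^sub>R w) + t *\<^sub>R v) - u (x + t *\<^sub>R v)" for t
  define a' where "a' t = g ((x + s *\<^sub>R w) + t *\<^sub>R v) \<bullet> v - g (x + t *\<^sub>R v) \<bullet> v" for t
  have da: "(a has_real_derivative a' t) (at t)" for t
    unfolding a_def a'_def by (intro DERIV_diff line_d1[OF C2])
  obtain \<tau> where tau: "0 < \<tau>" "\<tau> < s" "a s - a 0 = (s - 0) * a' \<tau>"
    using MVT2[of 0 s a a'] s da by blast
  define b where "b r = g ((x + \<tau> *\<^sub>R v) + r *\<^sub>R w) \<bullet> v" for r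
  define b' where "b' r = v \<bullet> (H ((x + \<tau> *\<^sub>R v) + r *\<^sub>R w) *v w)" for r
  have db: "(b has_real_derivative b' r) (at r)" for r
    unfolding b_def b'_def by (rule line_d2g[OF C2])
  obtain \<rho> where rho: "0 < \<rho>" "\<rho> < s" "b s - b 0 = (s - 0) * b' \<rho>"
    using MVT2[of 0 s b b'] s db by blast
  have "a' \<tau> = b s - b 0"
    unfolding a'_def b_def by (simp add: algebra_simps)
  moreover have "a s - a 0 = u (x + s *\<^sub>R v + s *\<^sub>R w) - u (x + s *\<^sub>R v) - u (x + s *\<^sub>R w) + u x"
    unfolding a_def by (simp add: algebra_simps)
  ultimately have "u (x + s *\<^sub>R v + s *\<^sub>R w) - u (x + s *\<^sub>R v) - u (x + s *\<^sub>R w) + u x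
      = s^2 * (v \<bullet> (H (x + \<tau> *\<^sub>R v + \<rho> *\<^sub>R w) *v w))"
    using tau rho unfolding b'_def by (simp add: power2_eq_square)
  then show ?thesis using tau rho by blast
qed

lemma cont_form:
  assumes C2: "C2_with_hessian u g H"
  shows "isCont (\<lambda>y. v \<bullet> (H y *v w)) x"
proof -
  have "continuous_on UNIV H" using C2 unfolding C2_with_hessian_def by blast
  then have cH: "isCont H x" by (simp add: continuous_on_eq_continuous_at)
  have eq: "(\<lambda>y. v \<bullet> (H y *v w)) = (\<lambda>y. \<Sum>i\<in>UNIV. v$i * (\<Sum>j\<in>UNIV. H y $ i $ j * w $ j))"
    by (simp add: inner_vec_def matrix_vector_mult_def fun_eq_iff mult.commute)
  show ?thesis
    unfolding eq
    by (intro continuous_intros isCont_vec_nth cH)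
qed

lemma hess_sym:
  assumes C2: "C2_with_hessian u g H"
  shows "v \<bullet> (H x *v w) = w \<bullet> (H x *v v)"
proof (rule ccontr)
  assume ne: "v \<bullet> (H x *v w) \<noteq> w \<bullet> (H x *v v)"
  define \<epsilon> where "\<epsilon> = \<bar>v \<bullet> (H x *v w) - w \<bullet> (H x *v v)\<bar> / 2"
  have ep: "\<epsilon> > 0" using ne unfolding \<epsilon>_def by simp
  have c1: "\<forall>e>0. \<exists>d>0. \<forall>y. dist y x < d \<longrightarrow> dist (v \<bullet> (H y *v w)) (v \<bullet> (H x *v w)) < e"
    using cont_form[OF C2, where v=v and w=w and x=x] unfolding continuous_at_eps_delta .
  obtain d1 where d1: "d1 > 0" "\<And>y. dist y x < d1 \<Longrightarrow> dist (v \<bullet> (H y *v w)) (v \<bullet> (H x *v w)) < \<epsilon>"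
    using c1[rule_format, OF ep] by blast
  have c2: "\<forall>e>0. \<exists>d>0. \<forall>y. dist y x < d \<longrightarrow> dist (w \<bullet> (H y *v v)) (w \<bullet> (H x *v v)) < e"
    using cont_form[OF C2, where v=w and w=v and x=x] unfolding continuous_at_eps_delta .
  obtain d2 where d2: "d2 > 0" "\<And>y. dist y x < d2 \<Longrightarrow> dist (w \<bullet> (H y *v v)) (w \<bullet> (H x *v v)) < \<epsilon>"
    using c2[rule_format, OF ep] by blast
  define s where "s = min d1 d2 / (2 * (norm v + norm w + 1))"
  have den: "2 * (norm v + norm w + 1) > 0" by (smt (verit) norm_ge_zero)
  have s: "s > 0" unfolding s_def using d1(1) d2(1) den by (intro divide_pos_pos) auto
  have sb: "s * (norm v + norm w) < min d1 d2"
  proof -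
    have "s * (norm v + norm w) \<le> s * (norm v + norm w + 1)" using s by simp
    also have "\<dots> = min d1 d2 / 2" unfolding s_def
      using den by (simp add: field_simps)
    finally show ?thesis using d1 d2 by simp
  qed
  obtain t1 r1 where tr1: "0 < t1" "t1 < s" "0 < r1" "r1 < s"
    "u (x + s *\<^sub>R v + s *\<^sub>R w) - u (x + s *\<^sub>R v) - u (x + s *\<^sub>R w) + u x
      = s^2 * (v \<bullet> (H (x + t1 *\<^sub>R v + r1 *\<^sub>R w) *v w))"
    using delta_repr[OF C2 s, of x v w] by blast
  obtain t2 r2 where tr2: "0 < t2" "t2 < s" "0 < r2" "r2 < s"
    "u (x + s *\<^sub>R w + s *\<^sub>R v) - u (x + s *\<^sub>R w) - u (x + s *\<^sub>R v) + u x
      = s^2 * (w \<bullet> (H (x + t2 *\<^sub>R w + r2 *\<^sub>R v) *v v))"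
    using delta_repr[OF C2 s, of x w v] by blast
  have eq: "v \<bullet> (H (x + t1 *\<^sub>R v + r1 *\<^sub>R w) *v w) = w \<bullet> (H (x + t2 *\<^sub>R w + r2 *\<^sub>R v) *v v)"
  proof -
    have xe: "x + s *\<^sub>R w + s *\<^sub>R v = x + s *\<^sub>R v + s *\<^sub>R w" by (simp add: algebra_simps)
    have t2': "u (x + s *\<^sub>R v + s *\<^sub>R w) - u (x + s *\<^sub>R w) - u (x + s *\<^sub>R v) + u x
      = s^2 * (w \<bullet> (H (x + t2 *\<^sub>R w + r2 *\<^sub>R v) *v v))" using tr2(5) unfolding xe .
    have "s^2 * (v \<bullet> (H (x + t1 *\<^sub>R v + r1 *\<^sub>R w) *v w)) = s^2 * (w \<bullet> (H (x + t2 *\<^sub>R w + r2 *\<^sub>R v) *v v))"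
      using tr1(5) t2' by linarith
    then show ?thesis using s by simp
  qed
  have n1: "dist (x + t1 *\<^sub>R v + r1 *\<^sub>R w) x < d1"
  proof -
    have "dist (x + t1 *\<^sub>R v + r1 *\<^sub>R w) x = norm (t1 *\<^sub>R v + r1 *\<^sub>R w)" by (simp add: dist_norm)
    also have "\<dots> \<le> t1 * norm v + r1 * norm w"
      using tr1 norm_triangle_ineq[of "t1 *\<^sub>R v" "r1 *\<^sub>R w"] by simp
    also have "\<dots> \<le> s * norm v + s * norm w"
      using tr1 by (intro add_mono mult_right_mono) auto
    finally show ?thesis using sb by (simp add: distrib_left)
  qed
  have n2: "dist (x + t2 *\<^sub>R w + r2 *\<^sub>R v) x < d2"
  proof -
    have "dist (x + t2 *\<^sub>R w + r2 *\<^sub>R v) x = norm (t2 *\<^sub>R w + r2 *\<^sub>R v)" by (simp add: dist_norm)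
    also have "\<dots> \<le> t2 * norm w + r2 * norm v"
      using tr2 norm_triangle_ineq[of "t2 *\<^sub>R w" "r2 *\<^sub>R v"] by simp
    also have "\<dots> \<le> s * norm w + s * norm v"
      using tr2 by (intro add_mono mult_right_mono) auto
    finally show ?thesis using sb by (simp add: distrib_left)
  qed
  have "dist (v \<bullet> (H x *v w)) (w \<bullet> (H x *v v)) < \<epsilon> + \<epsilon>"
    using d1(2)[OF n1] d2(2)[OF n2] eq unfolding dist_real_def by linarith
  then show False unfolding \<epsilon>_def dist_real_def by simp
qed



lemma comp:
  fixes u :: "real^'n \<Rightarrow> real"
  assumes C2: "C2_with_hessian u g H" and cv: "convex_on UNIV u"
    and lam: "lam > 0" and s: "s > 0"
    and dl: "\<And>y. y \<in> cball c s \<Longrightarrow> det (H y) \<ge> lam ^ CARD('n)"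
  shows "\<exists>y. dist c y = s \<and> u y - u c - g c \<bullet> (y - c) \<ge> lam * s^2 / 4"
proof (rule ccontr)
  assume "\<not> ?thesis"
  then have bd: "\<And>y. dist c y = s \<Longrightarrow> u y - u c - g c \<bullet> (y - c) < lam * s^2/4" by force
  define l where "l = lam/2"
  have l: "l > 0" using lam unfolding l_def by simp
  define w where "w y = u y - g c \<bullet> y - (l/2) * ((y - c) \<bullet> (y - c))" for y
  have cw: "continuous_on (cball c s) w" unfolding w_def by (intro continuous_intros u_cont[OF C2])
  have ne: "cball c s \<noteq> {}" using s by auto
  obtain x0 where x0: "x0 \<in> cball c s" "\<And>y. y \<in> cball c s \<Longrightarrow> w y \<le> w x0"
    using continuous_attains_sup[OF compact_cball ne cw] by blast
  have int: "dist c x0 < s"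
  proof (rule ccontr)
    assume "\<not> dist c x0 < s"
    then have ds: "dist c x0 = s" using x0(1) by simp
    have "norm (x0 - c) = s" using ds by (simp add: dist_norm norm_minus_commute)
    then have sq: "(x0 - c) \<bullet> (x0 - c) = s^2" by (simp add: power2_norm_eq_inner[symmetric])
    have "w x0 - w c = u x0 - u c - g c \<bullet> (x0 - c) - lam * s^2/4"
      unfolding w_def l_def using sq by (simp add: inner_diff_right algebra_simps)
    also have "\<dots> < 0" using bd[OF ds] by simp
    finally have "w x0 < w c" by simp
    moreover have "w c \<le> w x0" using x0(2) s by simp
    ultimately show False by simp
  qed
  have hq: "e \<bullet> (H x0 *v e) \<le> l * (e \<bullet> e)" for e
  proof -
    define d where "d = x0 - c"
    define psi where "psi t = u (x0 + t *\<^sub>R e) - g c \<bullet> x0 - t * (g c \<bullet> e) - (l/2) * (d \<bullet> d + 2*t*(d \<bullet> e) + t^2*(e \<bullet> e))" for t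
    define psi' where "psi' t = g (x0 + t *\<^sub>R e) \<bullet> e - g c \<bullet> e - (l/2) * (2*(d \<bullet> e) + 2*t*(e \<bullet> e))" for t
    have d1: "(psi has_real_derivative psi' t) (at t)" for t
    proof -
      have p1: "((\<lambda>t. g c \<bullet> x0 + t * (g c \<bullet> e) + (l/2) * (d \<bullet> d + 2*t*(d \<bullet> e) + t^2*(e \<bullet> e)))
          has_real_derivative (g c \<bullet> e + (l/2) * (2*(d \<bullet> e) + 2*t*(e \<bullet> e)))) (at t)"
        by (auto intro!: derivative_eq_intros simp: algebra_simps)
      have "((\<lambda>t. u (x0 + t *\<^sub>R e) - (g c \<bullet> x0 + t * (g c \<bullet> e) + (l/2) * (d \<bullet> d + 2*t*(d \<bullet> e) + t^2*(e \<bullet> e))))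
          has_real_derivative (g (x0 + t *\<^sub>R e) \<bullet> e - (g c \<bullet> e + (l/2) * (2*(d \<bullet> e) + 2*t*(e \<bullet> e))))) (at t)"
        by (rule DERIV_diff[OF line_d1[OF C2] p1])
      moreover have "psi = (\<lambda>t. u (x0 + t *\<^sub>R e) - (g c \<bullet> x0 + t * (g c \<bullet> e) + (l/2) * (d \<bullet> d + 2*t*(d \<bullet> e) + t^2*(e \<bullet> e))))"
        unfolding psi_def by (simp add: fun_eq_iff)
      moreover have "psi' t = g (x0 + t *\<^sub>R e) \<bullet> e - (g c \<bullet> e + (l/2) * (2*(d \<bullet> e) + 2*t*(e \<bullet> e)))"
        unfolding psi'_def by simp
      ultimately show ?thesis by simp
    qed
    have d2: "(psi' has_real_derivative (e \<bullet> (H x0 *v e) - l*(e \<bullet> e))) (at 0)"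
    proof -
      have p1: "((\<lambda>t. g c \<bullet> e + (l/2) * (2*(d \<bullet> e) + 2*t*(e \<bullet> e))) has_real_derivative (l * (e \<bullet> e))) (at 0)"
        by (auto intro!: derivative_eq_intros simp: algebra_simps)
      have "((\<lambda>t. g (x0 + t *\<^sub>R e) \<bullet> e - (g c \<bullet> e + (l/2) * (2*(d \<bullet> e) + 2*t*(e \<bullet> e))))
          has_real_derivative (e \<bullet> (H (x0 + 0 *\<^sub>R e) *v e) - l * (e \<bullet> e))) (at 0)"
        by (rule DERIV_diff[OF line_d2g[OF C2] p1])
      moreover have "psi' = (\<lambda>t. g (x0 + t *\<^sub>R e) \<bullet> e - (g c \<bullet> e + (l/2) * (2*(d \<bullet> e) + 2*t*(e \<bullet> e))))"
        unfolding psi'_def by (simp add: fun_eq_iff)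
      ultimately show ?thesis by simp
    qed
    have pw: "psi t = w (x0 + t *\<^sub>R e)" for t
      unfolding psi_def w_def d_def
      by (simp add: inner_add_left inner_add_right inner_diff_left inner_diff_right algebra_simps power2_eq_square inner_commute)
    define \<delta> where "\<delta> = (s - dist c x0) / (norm e + 1)"
    have ne1: "norm e + 1 > 0" by (smt (verit) norm_ge_zero)
    have dp: "\<delta> > 0" unfolding \<delta>_def using int ne1 by simp
    have "psi t \<le> psi 0" if t: "\<bar>t\<bar> < \<delta>" for t
    proof -
      have "dist c (x0 + t *\<^sub>R e) \<le> dist c x0 + dist x0 (x0 + t *\<^sub>R e)" by (rule dist_triangle)
      also have "dist x0 (x0 + t *\<^sub>R e) = \<bar>t\<bar> * norm e" by (simp add: dist_norm)
      also have "\<bar>t\<bar> * norm e \<le> \<delta> * (norm e + 1)"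
        using t by (intro mult_mono) (auto simp: less_imp_le)
      also have "\<delta> * (norm e + 1) = s - dist c x0" unfolding \<delta>_def using ne1 by simp
      finally have "x0 + t *\<^sub>R e \<in> cball c s" by simp
      then show ?thesis using x0(2) pw[of t] pw[of 0] by simp
    qed
    then have "e \<bullet> (H x0 *v e) - l*(e \<bullet> e) \<le> 0"
      by (intro second_order_max[OF d1 d2 dp]) auto
    then show ?thesis by simp
  qed
  have "det (H x0) \<le> l ^ CARD('n)"
    by (rule det_bound) (use hess_sym[OF C2] psd[OF C2 cv] hq l in auto)
  moreover have "l ^ CARD('n) < lam ^ CARD('n)"
    using lam l by (intro power_strict_mono) (auto simp: l_def)
  moreover have "det (H x0) \<ge> lam ^ CARD('n)" using dl x0(1) by blast
  ultimately show False by simp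
qed



lemma step:
  fixes u :: "real^'n \<Rightarrow> real" and f :: "real \<Rightarrow> real"
  assumes C2: "C2_with_hessian u g H" and cv: "convex_on UNIV u"
    and pos: "\<And>x. u x > 0" and deq: "\<And>x. det (H x) = f (u x)"
    and gr: "\<And>s. s > 0 \<Longrightarrow> f s \<ge> A * s powr p" and A: "A > 0" and p: "p > 0"
    and s: "s > 0"
  shows "\<exists>z. dist x1 z \<le> 2 * s \<and> u z \<ge> (A * (u x1) powr p) powr (1/real CARD('n)) * s^2/8"
proof -
  define m where "m = u x1"
  have m: "m > 0" using pos unfolding m_def by simp
  define N where "N = real CARD('n)"
  have N: "N > 0" unfolding N_def by simp
  define lam where "lam = (A * m powr p) powr (1/N)"
  have am: "A * m powr p > 0" using A m by simp
  have lam: "lam > 0" unfolding lam_def using am A m by simp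
  have lamn: "lam ^ CARD('n) = A * m powr p"
  proof -
    have "lam ^ CARD('n) = lam powr N" unfolding N_def using lam by (simp add: powr_realpow)
    also have "\<dots> = (A * m powr p) powr (1/N * N)" unfolding lam_def by (simp add: powr_powr)
    also have "\<dots> = A * m powr p" using N am by simp
    finally show ?thesis .
  qed
  define e :: "real^'n" where "e = (if g x1 = 0 then axis undefined 1 else (1 / norm (g x1)) *\<^sub>R g x1)"
  have ne: "norm e = 1" unfolding e_def by auto
  have ge: "g x1 \<bullet> e = norm (g x1)"
    unfolding e_def by (auto simp: power2_norm_eq_inner[symmetric] power2_eq_square)
  define c where "c = x1 + s *\<^sub>R e"
  have ub: "u y \<ge> m" if y: "y \<in> cball c s" for y
  proof -
    have "u y \<ge> u x1 + g x1 \<bullet> (y - x1)" by (rule tangent[OF C2 cv])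
    moreover have "y - x1 = s *\<^sub>R e + (y - c)" unfolding c_def by simp
    moreover have "\<bar>g x1 \<bullet> (y - c)\<bar> \<le> norm (g x1) * norm (y - c)" by (rule Cauchy_Schwarz_ineq2)
    moreover have "norm (y - c) \<le> s" using y by (simp add: dist_norm norm_minus_commute)
    moreover have "norm (g x1) * norm (y - c) \<le> norm (g x1) * s"
      using \<open>norm (y - c) \<le> s\<close> by (simp add: mult_left_mono)
    ultimately show ?thesis unfolding m_def using ge s
      by (simp add: inner_add_right) (smt (verit) mult.commute)
  qed
  have dl: "det (H y) \<ge> lam ^ CARD('n)" if "y \<in> cball c s" for y
  proof -
    have uy: "u y \<ge> m" using ub[OF that] .
    have "det (H y) = f (u y)" by (rule deq)
    also have "\<dots> \<ge> A * (u y) powr p" using gr pos by blast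
    finally have "det (H y) \<ge> A * (u y) powr p" .
    moreover have "A * m powr p \<le> A * (u y) powr p"
      using uy m p A by (intro mult_left_mono powr_mono2) auto
    ultimately show ?thesis using lamn by simp
  qed
  obtain y where y: "dist c y = s" "u y - u c - g c \<bullet> (y - c) \<ge> lam * s^2 / 4"
    using comp[OF C2 cv lam s dl] by blast
  define y2 where "y2 = (if g c = 0 then c else c + (s / norm (g c)) *\<^sub>R g c)"
  have y2d: "dist c y2 \<le> s" unfolding y2_def using s by (auto simp: dist_norm)
  have y2u: "u y2 - u c \<ge> s * norm (g c)"
  proof (cases "g c = 0")
    case True then show ?thesis unfolding y2_def by simp
  next
    case False
    have "u y2 \<ge> u c + g c \<bullet> (y2 - c)" by (rule tangent[OF C2 cv])
    moreover have "g c \<bullet> (y2 - c) = s * norm (g c)"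
      unfolding y2_def using False by (simp add: power2_norm_eq_inner[symmetric] power2_eq_square)
    ultimately show ?thesis by simp
  qed
  have "\<bar>g c \<bullet> (y - c)\<bar> \<le> norm (g c) * norm (y - c)" by (rule Cauchy_Schwarz_ineq2)
  moreover have "norm (y - c) = s" using y(1) by (simp add: dist_norm norm_minus_commute)
  ultimately have "- (g c \<bullet> (y - c)) \<le> s * norm (g c)" by (simp add: mult.commute)
  then have "lam * s^2/4 \<le> u y + u y2" using y(2) y2u pos[of c] by linarith
  then have or: "u y \<ge> lam * s^2/8 \<or> u y2 \<ge> lam * s^2/8" by linarith
  have dc: "dist x1 c = s" unfolding c_def using ne s by (simp add: dist_norm)
  have "dist x1 y \<le> 2 * s" using dist_triangle[of x1 y c] dc y(1) by simp
  moreover have "dist x1 y2 \<le> 2 * s" using dist_triangle[of x1 y2 c] dc y2d by simp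
  ultimately show ?thesis using or unfolding lam_def N_def m_def by blast
qed

theorem theorem1p3:
  fixes f :: "real \<Rightarrow> real" and A p :: real
  assumes n2: "CARD('n::finite) \<ge> 2"
    and f_cont: "continuous_on {0<..} f"
    and f_pos: "\<And>s. s > 0 \<Longrightarrow> f s > 0"
    and f_mono: "mono_on {0<..} f"
    and p_gt: "p > real CARD('n)"
    and A_pos: "A > 0"
    and f_growth: "\<And>s. s > 0 \<Longrightarrow> f s \<ge> A * s powr p"
  shows "\<not> (\<exists>(u :: real^'n \<Rightarrow> real) g H.
              C2_with_hessian u g H \<and>
              convex_on UNIV u \<and>
              (\<forall>x. u x > 0) \<and>
              (\<forall>x. det (H x) = f (u x)))"
proof
  assume "\<exists>(u :: real^'n \<Rightarrow> real) g H. C2_with_hessian u g H \<and> convex_on UNIV u \<and>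
              (\<forall>x. u x > 0) \<and> (\<forall>x. det (H x) = f (u x))"
  then obtain u :: "real^'n \<Rightarrow> real" and g H where C2: "C2_with_hessian u g H" and cv: "convex_on UNIV u"
    and pos: "\<And>x. u x > 0" and deq: "\<And>x. det (H x) = f (u x)" by blast
  define N where "N = real CARD('n)"
  have N: "N > 0" unfolding N_def by simp
  have p: "p > 0" using p_gt N unfolding N_def by simp
  define q where "q = p / N"
  have q: "q > 1" using p_gt N unfolding q_def N_def by simp
  define a where "a = (q - 1) / 2"
  have a: "a > 0" using q unfolding a_def by simp
  define K where "K = A powr (1/N) / 8"
  have K: "K > 0" using A_pos unfolding K_def by simp
  define C where "C = sqrt (2 / K)"
  have C: "C > 0" using K unfolding C_def by simp
  have C2K: "C^2 = 2 / K" unfolding C_def using K by simp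
  define r :: real where "r = 2 powr (-a)"
  have r0: "r > 0" unfolding r_def by simp
  have r1: "r < 1" unfolding r_def using a by (simp add: powr_less_one)
  define x0 :: "real^'n" where "x0 = 0"
  define m0 where "m0 = u x0"
  have m0: "m0 > 0" using pos unfolding m0_def by simp
  define T where "T = 2 * C * m0 powr (-a) / (1 - r)"
  have T: "T \<ge> 0" unfolding T_def using C r1 m0 by simp
  have val: "(A * m powr p) powr (1/N) * (C * m powr (-a))^2 / 8 = 2 * m" if m: "m > 0" for m
  proof -
    have "(A * m powr p) powr (1/N) = A powr (1/N) * m powr q"
      using A_pos m by (simp add: powr_mult powr_powr q_def)
    moreover have "(C * m powr (-a))^2 = (2/K) * m powr (-2*a)"
    proof -
      have "(C * m powr (-a))^2 = C^2 * (m powr (-a) * m powr (-a))" by (simp add: power2_eq_square algebra_simps)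
      also have "m powr (-a) * m powr (-a) = m powr (-2*a)" by (simp add: powr_add[symmetric])
      finally show ?thesis by (simp add: C2K)
    qed
    ultimately have "(A * m powr p) powr (1/N) * (C * m powr (-a))^2 / 8
        = (A powr (1/N) / 8 / K) * 2 * (m powr q * m powr (-2*a))" by (simp add: algebra_simps)
    also have "m powr q * m powr (-2*a) = m"
    proof -
      have "m powr q * m powr (-2*a) = m powr (q + (-2*a))" by (rule powr_add[symmetric])
      also have "q + (-2*a) = 1" unfolding a_def by (simp add: field_simps)
      finally show ?thesis using m by simp
    qed
    also have "A powr (1/N) / 8 / K = 1" using K unfolding K_def by simp
    finally show ?thesis by simp
  qed
  have ind: "\<exists>x. dist x0 x \<le> T * (1 - r^k) \<and> u x \<ge> 2^k * m0" for k
  proof (induction k)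
    case 0 show ?case by (intro exI[of _ x0]) (simp add: m0_def)
  next
    case (Suc k)
    then obtain x where x: "dist x0 x \<le> T * (1 - r^k)" "u x \<ge> 2^k * m0" by blast
    define m where "m = u x"
    have m: "m > 0" using pos unfolding m_def by simp
    define s where "s = C * m powr (-a)"
    have s: "s > 0" unfolding s_def using C m by simp
    obtain z where z: "dist x z \<le> 2 * s" "u z \<ge> (A * (u x) powr p) powr (1/real CARD('n)) * s^2/8"
      using step[OF C2 cv pos deq f_growth A_pos p s] by blast
    have uz: "u z \<ge> 2 * m" using z(2) val[OF m] unfolding s_def m_def N_def by simp
    have km: "2^k * m0 > 0" using m0 by simp
    have "m powr (-a) \<le> (2^k * m0) powr (-a)"
      using x(2) km a unfolding m_def by (intro powr_mono2') auto
    also have "(2^k * m0) powr (-a) = r^k * m0 powr (-a)"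
    proof -
      have e2: "(2::real)^k = 2 powr (real k)" by (simp add: powr_realpow)
      have "(2^k * m0) powr (-a) = (2 powr (real k)) powr (-a) * m0 powr (-a)" using m0 by (simp add: powr_mult e2)
      also have "(2 powr (real k)) powr (-a) = r powr (real k)" unfolding r_def by (simp add: powr_powr mult.commute)
      also have "r powr (real k) = r^k" using r0 by (simp add: powr_realpow)
      finally show ?thesis .
    qed
    finally have sb: "s \<le> C * (r^k * m0 powr (-a))" unfolding s_def using C by (simp add: mult_left_mono)
    have "dist x0 z \<le> dist x0 x + dist x z" by (rule dist_triangle)
    also have "\<dots> \<le> T * (1 - r^k) + 2 * (C * (r^k * m0 powr (-a)))" using x(1) z(1) sb by simp
    also have "2 * (C * (r^k * m0 powr (-a))) = T * (1 - r) * r^k" unfolding T_def using r1 by simp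
    also have "T * (1 - r^k) + T * (1 - r) * r^k = T * (1 - r^Suc k)" by (simp add: algebra_simps)
    finally have "dist x0 z \<le> T * (1 - r^Suc k)" .
    moreover have "u z \<ge> 2^Suc k * m0" using uz x(2) unfolding m_def by simp
    ultimately show ?case by blast
  qed
  have ne: "cball x0 T \<noteq> {}" using T by auto
  obtain xm where xm: "xm \<in> cball x0 T" "\<And>y. y \<in> cball x0 T \<Longrightarrow> u y \<le> u xm"
    using continuous_attains_sup[OF compact_cball ne u_cont[OF C2]] by blast
  obtain k where k: "u xm / m0 < 2^k" using real_arch_pow[of 2 "u xm / m0"] by auto
  obtain x where x: "dist x0 x \<le> T * (1 - r^k)" "u x \<ge> 2^k * m0" using ind by blast
  have "T * (1 - r^k) \<le> T" using T r0 by (simp add: mult_left_le)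
  then have "x \<in> cball x0 T" using x(1) by simp
  then have "u x \<le> u xm" by (rule xm(2))
  moreover have "u xm < 2^k * m0" using k m0 by (simp add: divide_less_eq)
  ultimately show False using x(2) by simp
qed


end
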